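(* Let $c<-14$ and let $u\in\mathbb{R}^3$ with $\kappa(u)=c$. Then there exists $\gamma\in\Gamma$ such that $u'=\gamma u=(x',y',z')$ satisfies at least one of: (M) $u'\in\Omega_0^M$; (E) $-2\le \bar z(u')\le 2$, i.e. $-2\le -x'y'-z'\le 2$; ($\Sigma$) $x'=0$ or $y'=0$.
   Context: $\kappa(x,y,z)=-x^2-y^2+z^2+xyz-2$ on $\mathbb{R}^3$; for $u=(x,y,z)$ set $\bar z(u)=-xy-z$. $Q_x(x,y,z)=(yz-x,y,z)$, $Q_y(x,y,z)=(x,xz-y,z)$, $Q_z(x,y,z)=(x,y,-xy-z)$. $\Gamma$ is the group generated by $Q_x,Q_y,Q_z$, the sign changes $(x,y,z)\mapsto(-x,y,-z)$, $(x,-y,-z)$, $(-x,-y,z)$ and the transposition $(x,y,z)\mapsto(y,x,z)$; all preserve $\kappa$. $\Omega_0^M=\{(x,y,z): z<-2,\ xy+z>2\}$. *)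

theory Defs
  imports Complex_Main
begin

type_synonym point = "real \<times> real \<times> real"

definition kappa :: "point \<Rightarrow> real" where
  "kappa u = (case u of (x, y, z) \<Rightarrow> z^2 - x^2 - y^2 + x*y*z - 2)"

definition zbar :: "point \<Rightarrow> real" where
  "zbar u = (case u of (x, y, z) \<Rightarrow> - x*y - z)"

definition Qx :: "point \<Rightarrow> point" where
  "Qx u = (case u of (x, y, z) \<Rightarrow> (y*z - x, y, z))"

definition Qy :: "point \<Rightarrow> point" where
  "Qy u = (case u of (x, y, z) \<Rightarrow> (x, x*z - y, z))"

definition Qz :: "point \<Rightarrow> point" where
  "Qz u = (case u of (x, y, z) \<Rightarrow> (x, y, - x*y - z))"

definition S1 :: "point \<Rightarrow> point" where
  "S1 u = (case u of (x, y, z) \<Rightarrow> (-x, y, -z))"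

definition S2 :: "point \<Rightarrow> point" where
  "S2 u = (case u of (x, y, z) \<Rightarrow> (x, -y, -z))"

definition S3 :: "point \<Rightarrow> point" where
  "S3 u = (case u of (x, y, z) \<Rightarrow> (-x, -y, z))"

definition Tr :: "point \<Rightarrow> point" where
  "Tr u = (case u of (x, y, z) \<Rightarrow> (y, x, z))"

definition generators :: "(point \<Rightarrow> point) set" where
  "generators = {Qx, Qy, Qz, S1, S2, S3, Tr}"

inductive_set Gamma :: "(point \<Rightarrow> point) set" where
  Gamma_id: "id \<in> Gamma"
| Gamma_gen: "g \<in> generators \<Longrightarrow> g \<in> Gamma"
| Gamma_comp: "f \<in> Gamma \<Longrightarrow> g \<in> Gamma \<Longrightarrow> f \<circ> g \<in> Gamma"
| Gamma_inv: "f \<in> Gamma \<Longrightarrow> inv f \<in> Gamma"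

definition Omega0M :: "point set" where
  "Omega0M = {(x, y, z). z < -2 \<and> x*y + z > 2}"

end

theory Submission
  imports Defs
begin

definition PP :: "point \<Rightarrow> bool" where
  "PP u = (\<exists>\<gamma>\<in>Gamma. \<exists>x' y' z'. \<gamma> u = (x', y', z') \<and>
           ((x', y', z') \<in> Omega0M
            \<or> (-2 \<le> - x'*y' - z' \<and> - x'*y' - z' \<le> 2)
            \<or> x' = 0 \<or> y' = 0))"

lemma PP_comp: assumes "g \<in> Gamma" "PP (g u)" shows "PP u"
proof -
  from assms(2) obtain \<gamma> x' y' z' where h: "\<gamma> \<in> Gamma" "\<gamma> (g u) = (x', y', z')"
    "((x', y', z') \<in> Omega0M
            \<or> (-2 \<le> - x'*y' - z' \<and> - x'*y' - z' \<le> 2)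
            \<or> x' = 0 \<or> y' = 0)" unfolding PP_def by blast
  have "\<gamma> \<circ> g \<in> Gamma" using h(1) assms(1) by (rule Gamma_comp)
  then show ?thesis unfolding PP_def using h(2,3) by (intro bexI[of _ "\<gamma> \<circ> g"]) auto
qed

lemma PP_self: assumes "(x, y, z) \<in> Omega0M
            \<or> (-2 \<le> - x*y - z \<and> - x*y - z \<le> 2)
            \<or> x = 0 \<or> y = 0" shows "PP (x, y, z)"
  unfolding PP_def using assms Gamma_id by (intro bexI[of _ id] exI[of _ x] exI[of _ y] exI[of _ z] conjI) simp_all

lemma gens: "Qx \<in> Gamma" "Qy \<in> Gamma" "Qz \<in> Gamma" "S1 \<in> Gamma" "S2 \<in> Gamma"
  "S3 \<in> Gamma" "Tr \<in> Gamma"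
  by (auto intro: Gamma_gen simp: generators_def)

lemma kappa_inv: "kappa (Qx u) = kappa u" "kappa (Qz u) = kappa u"
  "kappa (S1 u) = kappa u" "kappa (S2 u) = kappa u" "kappa (S3 u) = kappa u"
  "kappa (Tr u) = kappa u" "kappa (Qy u) = kappa u"
  by (cases u; simp add: kappa_def Qx_def Qy_def Qz_def S1_def S2_def S3_def Tr_def algebra_simps power2_eq_square)+

definition triv :: "point \<Rightarrow> bool" where
  "triv u = (case u of (x, y, z) \<Rightarrow> x = 0 \<or> y = 0 \<or> \<bar>z\<bar> \<le> 2 \<or> \<bar>-x*y-z\<bar> \<le> 2
     \<or> z * (-x*y-z) \<ge> 0)"

lemma triv_PP: assumes "triv (x, y, z)" shows "PP (x, y, z)"
proof -
  consider "x = 0 \<or> y = 0 \<or> \<bar>-x*y-z\<bar> \<le> 2" | "\<bar>z\<bar> \<le> 2"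
    | "\<bar>z\<bar> > 2" "\<bar>-x*y-z\<bar> > 2" "z * (-x*y-z) \<ge> 0"
    using assms unfolding triv_def by force
  then show ?thesis
  proof cases
    case 1 then show ?thesis by (intro PP_self) auto
  next
    case 2
    have "PP (Qz (x, y, z))" unfolding Qz_def using 2 by (auto intro!: PP_self)
    then show ?thesis using PP_comp gens by blast
  next
    case 3
    show ?thesis
    proof (cases "z < 0")
      case True
      then have "-x*y-z \<le> 0" using 3(3) by (simp add: mult_le_0_iff zero_le_mult_iff)
      then show ?thesis using 3 True by (intro PP_self) (auto simp: Omega0M_def)
    next
      case False
      then have "z > 2" using 3 by auto
      then have "-x*y-z \<ge> 0" using 3(3) by (simp add: zero_le_mult_iff)
      then have "PP (-x, y, -z)" using 3 \<open>z > 2\<close>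
        by (intro PP_self) (auto simp: Omega0M_def)
      then have "PP (S1 (x, y, z))" by (simp add: S1_def)
      then show ?thesis using PP_comp gens by blast
    qed
  qed
qed


lemma signfix: "\<exists>g\<in>Gamma. \<exists>z1. g (x, y, z) = (\<bar>x\<bar>, \<bar>y\<bar>, z1)"
proof -
  consider "x \<ge> 0" "y \<ge> 0" | "x < 0" "y < 0" | "x < 0" "y \<ge> 0" | "x \<ge> 0" "y < 0" by linarith
  then show ?thesis
  proof cases
    case 1 then show ?thesis using Gamma_id by (intro bexI[of _ id]) auto
  next
    case 2 then show ?thesis using gens by (intro bexI[of _ S3]) (auto simp: S3_def)
  next
    case 3 then show ?thesis using gens by (intro bexI[of _ S1]) (auto simp: S1_def)
  next
    case 4 then show ?thesis using gens by (intro bexI[of _ S2]) (auto simp: S2_def)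
  qed
qed

lemma invol: "g \<in> generators \<Longrightarrow> g \<circ> g = id"
  unfolding generators_def
  by (auto simp: fun_eq_iff Qx_def Qy_def Qz_def S1_def S2_def S3_def Tr_def algebra_simps split: prod.splits)

lemma Gamma_bij: "g \<in> Gamma \<Longrightarrow> bij g"
proof (induction g rule: Gamma.induct)
  case Gamma_id then show ?case by (rule bij_id)
next
  case (Gamma_gen g) then show ?case using invol by (metis o_bij)
next
  case (Gamma_comp f g) then show ?case by (metis bij_comp)
next
  case (Gamma_inv f) then show ?case by (simp add: bij_imp_bij_inv)
qed

lemma kappa_Gamma: "g \<in> Gamma \<Longrightarrow> kappa (g u) = kappa u"
proof (induction g arbitrary: u rule: Gamma.induct)
  case Gamma_id then show ?case by simp
next
  case (Gamma_gen g)
  then show ?case unfolding generators_def by (auto simp only: kappa_inv insert_iff empty_iff)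
next
  case (Gamma_comp f g) then show ?case by simp
next
  case (Gamma_inv f)
  have "kappa (inv f u) = kappa (f (inv f u))" using Gamma_inv.IH by simp
  also have "f (inv f u) = u" using Gamma_bij[OF Gamma_inv.hyps] by (simp add: bij_is_surj surj_f_inv_f)
  finally show ?case .
qed


lemma norm: "PP (x, y, z) \<or> (\<exists>g\<in>Gamma. \<exists>z'. g (x, y, z) = (\<bar>x\<bar>, \<bar>y\<bar>, z') \<and> z' > 2)"
proof -
  obtain g1 z1 where g1: "g1 \<in> Gamma" "g1 (x, y, z) = (\<bar>x\<bar>, \<bar>y\<bar>, z1)" using signfix by blast
  show ?thesis
  proof (cases "triv (\<bar>x\<bar>, \<bar>y\<bar>, z1)")
    case True
    then have "PP (g1 (x, y, z))" using g1 triv_PP by simp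
    then show ?thesis by (rule disjI1[OF PP_comp[OF g1(1)]])
  next
    case False
    note ntr = this
    let ?w = "- \<bar>x\<bar> * \<bar>y\<bar> - z1"
    have nt: "\<not> (\<bar>x\<bar> = 0 \<or> \<bar>y\<bar> = 0 \<or> \<bar>z1\<bar> \<le> 2 \<or> \<bar>?w\<bar> \<le> 2 \<or> z1 * ?w \<ge> 0)"
      using ntr unfolding triv_def prod.case by assumption
    have f: "\<bar>z1\<bar> > 2" "\<bar>?w\<bar> > 2" "z1 * ?w < 0" using nt by (simp_all only: de_Morgan_disj not_le)
    show ?thesis
    proof (cases "z1 > 2")
      case True then show ?thesis using g1 by (intro disjI2 bexI[of _ g1] exI[of _ z1] conjI) simp_all
    next
      case False
      then have "z1 < -2" using f by linarith
      then have "?w > 0" using f(3) by (simp add: mult_less_0_iff)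
      then have "?w > 2" using f(2) by linarith
      moreover have "(Qz \<circ> g1) (x, y, z) = (\<bar>x\<bar>, \<bar>y\<bar>, ?w)" using g1 by (simp add: Qz_def)
      moreover have "Qz \<circ> g1 \<in> Gamma" using gens g1 by (simp add: Gamma_comp)
      ultimately show ?thesis by (intro disjI2 bexI[of _ "Qz \<circ> g1"] exI[of _ ?w] conjI) simp_all
    qed
  qed
qed

lemma step_arith:
  fixes x y z k :: real
  assumes "x \<ge> y" "y > 0" "z > 2" "k > 12" "z^2 + x*y*z = x^2 + y^2 - k"
  shows "\<bar>y*z - x\<bar> < x" "x^2 - (y*z-x)^2 \<ge> 2*y*(k+4)/x" "x - y > 4"
proof -
  have x0: "x > 0" using assms by linarith
  have h: "x*(2*x - y*z) = x^2 - y^2 + k + z^2" using assms(5) by (simp add: algebra_simps power2_eq_square)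
  have "x^2 \<ge> y^2" using assms(1,2) by (simp add: power_mono)
  moreover have "z^2 > 4"
  proof -
    have "z^2 - 4 = (z-2)*(z+2)" by (simp add: algebra_simps power2_eq_square)
    moreover have "(z-2)*(z+2) > 0" using assms(3) by simp
    ultimately show ?thesis by linarith
  qed
  ultimately have h2: "x*(2*x - y*z) \<ge> k + 4" using h by linarith
  then have h3: "2*x - y*z \<ge> (k+4)/x" using x0 by (simp add: field_simps mult.commute)
  have pk: "(k+4)/x > 0" using x0 assms(4) by simp
  have yz: "y*z \<ge> 2*y" using assms(2,3) by simp
  have yz0: "y*z > 0" using assms(2,3) by simp
  show "\<bar>y*z - x\<bar> < x" using h3 pk yz0 by linarith
  have "x^2 - (y*z-x)^2 = (y*z)*(2*x - y*z)" by (simp add: algebra_simps power2_eq_square)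
  also have "\<dots> \<ge> (2*y)*((k+4)/x)" using yz0 pk by (intro mult_mono[OF yz h3]) auto
  finally show "x^2 - (y*z-x)^2 \<ge> 2*y*(k+4)/x" by simp
  have "x*y*z > 2*x*y" using x0 assms(2,3) by simp
  moreover have "(x-y)^2 = x^2 + y^2 - 2*x*y" by (simp add: algebra_simps power2_eq_square)
  ultimately have q: "(x-y)^2 > 16" using assms(5,4) \<open>z^2 > 4\<close> by linarith
  show "x - y > 4"
  proof (rule ccontr)
    assume "\<not> x - y > 4"
    then have "(x-y)^2 \<le> 4^2" using assms(1) by (intro power_mono) auto
    then show False using q by simp
  qed
qed


lemma kappa_eq: "kappa (x, y, z) = c \<Longrightarrow> z^2 + x*y*z = x^2 + y^2 - (-2 - c)"
  by (simp add: kappa_def algebra_simps)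

lemma step:
  assumes c: "c < -14" and k: "kappa (x, y, z) = c" and xy: "\<bar>x\<bar> \<ge> \<bar>y\<bar>" and y: "y \<noteq> 0"
  shows "PP (x, y, z) \<or> (\<exists>g\<in>Gamma. \<exists>x' z'. g (x, y, z) = (x', \<bar>y\<bar>, z') \<and> \<bar>x'\<bar> < \<bar>x\<bar>
            \<and> x^2 - x'^2 \<ge> 2*\<bar>y\<bar>*((-2-c)+4)/\<bar>x\<bar>)"
proof -
  from norm[of x y z] show ?thesis
  proof
    assume "\<exists>g\<in>Gamma. \<exists>z'. g (x, y, z) = (\<bar>x\<bar>, \<bar>y\<bar>, z') \<and> z' > 2"
    then obtain g z' where g: "g \<in> Gamma" "g (x, y, z) = (\<bar>x\<bar>, \<bar>y\<bar>, z')" "z' > 2" by blast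
    have "kappa (\<bar>x\<bar>, \<bar>y\<bar>, z') = c" using kappa_Gamma[OF g(1), of "(x,y,z)"] g(2) k by simp
    then have e: "z'^2 + \<bar>x\<bar>*\<bar>y\<bar>*z' = \<bar>x\<bar>^2 + \<bar>y\<bar>^2 - (-2 - c)" by (rule kappa_eq)
    have y0: "\<bar>y\<bar> > 0" using y by simp
    have k12: "-2 - c > 12" using c by simp
    note sa = step_arith[OF xy y0 g(3) k12 e]
    have "(Qx \<circ> g) (x, y, z) = (\<bar>y\<bar>*z' - \<bar>x\<bar>, \<bar>y\<bar>, z')" using g(2) by (simp add: Qx_def)
    moreover have "Qx \<circ> g \<in> Gamma" using gens g(1) by (simp add: Gamma_comp)
    moreover have "\<bar>x\<bar>^2 = x^2" by simp
    ultimately show ?thesis using sa(1,2)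
      by (intro disjI2 bexI[of _ "Qx \<circ> g"] exI[of _ "\<bar>y\<bar>*z' - \<bar>x\<bar>"] exI[of _ z'] conjI) simp_all
  qed simp
qed

lemma diff_small:
  assumes c: "c < -14" and k: "kappa (x, y, z) = c" and xy: "\<bar>x\<bar> \<ge> \<bar>y\<bar>" and y: "y \<noteq> 0"
    and d: "\<bar>x\<bar> - \<bar>y\<bar> \<le> 4"
  shows "PP (x, y, z)"
proof -
  from norm[of x y z] show ?thesis
  proof
    assume "\<exists>g\<in>Gamma. \<exists>z'. g (x, y, z) = (\<bar>x\<bar>, \<bar>y\<bar>, z') \<and> z' > 2"
    then obtain g z' where g: "g \<in> Gamma" "g (x, y, z) = (\<bar>x\<bar>, \<bar>y\<bar>, z')" "z' > 2" by blast
    have "kappa (\<bar>x\<bar>, \<bar>y\<bar>, z') = c" using kappa_Gamma[OF g(1), of "(x,y,z)"] g(2) k by simp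
    then have e: "z'^2 + \<bar>x\<bar>*\<bar>y\<bar>*z' = \<bar>x\<bar>^2 + \<bar>y\<bar>^2 - (-2 - c)" by (rule kappa_eq)
    have y0: "\<bar>y\<bar> > 0" using y by simp
    have k12: "-2 - c > 12" using c by simp
    note sa = step_arith[OF xy y0 g(3) k12 e]
    then show ?thesis using d by linarith
  qed simp
qed

lemma inner:
  fixes c b X :: real
  assumes c: "c < -14" and b: "b > 0" and X: "X > 0"
    and H: "\<And>x y z. kappa (x, y, z) = c \<Longrightarrow> \<bar>x\<bar> \<le> b \<Longrightarrow> \<bar>y\<bar> \<le> b \<Longrightarrow> PP (x, y, z)"
  shows "kappa (x, y, z) = c \<Longrightarrow> \<bar>y\<bar> = b \<Longrightarrow> \<bar>x\<bar> \<le> X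
     \<Longrightarrow> x^2 \<le> real m * (2*b*((-2-c)+4)/X) \<Longrightarrow> PP (x, y, z)"
proof (induction m arbitrary: x y z)
  case 0
  then have "x = 0" by simp
  then show ?case using H[OF 0(1)] 0(2) b by simp
next
  case (Suc m)
  show ?case
  proof (cases "\<bar>x\<bar> \<le> b")
    case True then show ?thesis using H[OF Suc(2)] Suc(3) by simp
  next
    case False
    have y0: "y \<noteq> 0" using Suc(3) b by auto
    have xy: "\<bar>x\<bar> \<ge> \<bar>y\<bar>" using False Suc(3) by simp
    from step[OF c Suc(2) xy y0] show ?thesis
    proof
      assume "\<exists>g\<in>Gamma. \<exists>x' z'. g (x, y, z) = (x', \<bar>y\<bar>, z') \<and> \<bar>x'\<bar> < \<bar>x\<bar>
            \<and> x^2 - x'^2 \<ge> 2*\<bar>y\<bar>*((-2-c)+4)/\<bar>x\<bar>"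
      then obtain g x' z' where g: "g \<in> Gamma" "g (x, y, z) = (x', \<bar>y\<bar>, z')" "\<bar>x'\<bar> < \<bar>x\<bar>"
        "x^2 - x'^2 \<ge> 2*\<bar>y\<bar>*((-2-c)+4)/\<bar>x\<bar>" by blast
      have kk: "kappa (x', \<bar>y\<bar>, z') = c" using kappa_Gamma[OF g(1), of "(x,y,z)"] g(2) Suc(2) by simp
      have xpos: "\<bar>x\<bar> > 0" using False b by linarith
      have "2*b*((-2-c)+4)/X \<le> 2*b*((-2-c)+4)/\<bar>x\<bar>"
        using Suc(4) xpos c b by (intro divide_left_mono) auto
      moreover have "real (Suc m) * (2*b*((-2-c)+4)/X) = real m * (2*b*((-2-c)+4)/X) + 2*b*((-2-c)+4)/X"
        by (simp only: of_nat_Suc distrib_right mult_1)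
      moreover have "x^2 - x'^2 \<ge> 2*b*((-2-c)+4)/\<bar>x\<bar>" using g(4) Suc(3) by simp
      ultimately have "x'^2 \<le> real m * (2*b*((-2-c)+4)/X)" using Suc(5) by linarith
      moreover have "\<bar>x'\<bar> \<le> X" using g(3) Suc(4) by linarith
      ultimately have "PP (x', \<bar>y\<bar>, z')" using Suc.IH[OF kk] Suc(3) by simp
      then show ?thesis using PP_comp[OF g(1)] g(2) by simp
    qed simp
  qed
qed


lemma outer_step:
  fixes c :: real and n :: nat
  assumes c: "c < -14"
    and IH: "\<And>x y z. kappa (x, y, z) = c \<Longrightarrow> \<bar>x\<bar> \<le> 4 * real n \<Longrightarrow> \<bar>y\<bar> \<le> 4 * real n \<Longrightarrow> PP (x, y, z)"
    and k: "kappa (x, y, z) = c" and bx: "\<bar>x\<bar> \<le> 4 * real n + 4" and xy: "\<bar>y\<bar> \<le> \<bar>x\<bar>"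
  shows "PP (x, y, z)"
proof (cases "y = 0")
  case True then show ?thesis by (intro PP_self) simp
next
  case False
  note y0 = this
  show ?thesis
  proof (cases "\<bar>y\<bar> > 4 * real n")
    case True
    then show ?thesis using diff_small[OF c k xy y0] bx by linarith
  next
    case False
    define b where "b = \<bar>y\<bar>"
    define X where "X = \<bar>x\<bar>"
    define \<delta> where "\<delta> = 2*b*((-2-c)+4)/X"
    have b0: "b > 0" using y0 b_def by simp
    have X0: "X > 0" using b0 xy b_def X_def by linarith
    have d0: "\<delta> > 0" using b0 X0 c \<delta>_def by simp
    have H: "\<And>x y z. kappa (x, y, z) = c \<Longrightarrow> \<bar>x\<bar> \<le> b \<Longrightarrow> \<bar>y\<bar> \<le> b \<Longrightarrow> PP (x, y, z)"
    proof -
      fix x' y' z' assume a: "kappa (x', y', z') = c" "\<bar>x'\<bar> \<le> b" "\<bar>y'\<bar> \<le> b"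
      have "b \<le> 4 * real n" using False b_def by simp
      then show "PP (x', y', z')" using a(2,3) by (intro IH[OF a(1)]) linarith+
    qed
    define m where "m = nat \<lceil>x^2 / \<delta>\<rceil>"
    have "x^2 / \<delta> \<le> real m" unfolding m_def by linarith
    then have "x^2 \<le> real m * \<delta>" using d0 by (simp add: divide_le_eq)
    then have xm: "x^2 \<le> real m * (2*b*((-2-c)+4)/X)" unfolding \<delta>_def .
    have yb: "\<bar>y\<bar> = b" using b_def by simp
    have xX: "\<bar>x\<bar> \<le> X" using X_def by simp
    show ?thesis by (rule inner[OF c b0 X0 H k yb xX xm])
  qed
qed

lemma outer:
  fixes c :: real and n :: nat
  assumes c: "c < -14"
  shows "\<And>x y z. kappa (x, y, z) = c \<Longrightarrow> \<bar>x\<bar> \<le> 4 * real n \<Longrightarrow> \<bar>y\<bar> \<le> 4 * real n \<Longrightarrow> PP (x, y, z)"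
proof (induction n)
  case 0
  then show ?case by (intro PP_self) simp
next
  case (Suc n)
  show ?case
  proof (cases "\<bar>y\<bar> \<le> \<bar>x\<bar>")
    case True
    then show ?thesis using outer_step[OF c Suc.IH Suc.prems(1)] Suc.prems(2) by simp
  next
    case False
    have k': "kappa (y, x, z) = c" using kappa_inv(6)[of "(x,y,z)"] Suc.prems(1) by (simp add: Tr_def)
    have "PP (y, x, z)" using outer_step[OF c Suc.IH k'] Suc.prems(3) False by simp
    then have "PP (Tr (x, y, z))" by (simp add: Tr_def)
    then show ?thesis by (rule PP_comp[OF gens(7)])
  qed
qed

theorem mainTheorem4:
  fixes c :: real and u :: point
  assumes "c < -14" and "kappa u = c"
  shows "\<exists>\<gamma>\<in>Gamma. \<exists>x' y' z'. \<gamma> u = (x', y', z') \<and>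
           ((x', y', z') \<in> Omega0M
            \<or> (-2 \<le> - x'*y' - z' \<and> - x'*y' - z' \<le> 2)
            \<or> x' = 0 \<or> y' = 0)"
proof -
  obtain x y z where u: "u = (x, y, z)" by (cases u) auto
  define n where "n = nat \<lceil>max \<bar>x\<bar> \<bar>y\<bar> / 4\<rceil>"
  have "max \<bar>x\<bar> \<bar>y\<bar> / 4 \<le> real n" unfolding n_def by linarith
  then have "\<bar>x\<bar> \<le> 4 * real n" "\<bar>y\<bar> \<le> 4 * real n" by linarith+
  then have "PP (x, y, z)" using outer[OF assms(1)] assms(2) u by simp
  then show ?thesis unfolding PP_def u .
qed

end
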